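(* Let $z,x,y\in[0,1]$ with $z=x+y$, and let $z=(z_0.z_1z_2\ldots)_2$, $x=(x_0.x_1x_2\ldots)_2$, $y=(y_0.y_1y_2\ldots)_2$ be concise binary expansions. Let $\ell\ge0$ be an index. If $x_\ell y_\ell z_\ell\in\{000,011,101,110\}$ and $z_j=0$ for all $j>\ell$, then $x_j=y_j=0$ for all $j>\ell$.
   Context: A concise binary expansion of a real number is a binary representation $(z_0.z_1z_2\ldots)_2=\sum_{i\ge0}z_i2^{-i}$ with $z_i\in\{0,1\}$ that does not end in an infinite string of 1s. $x_\ell y_\ell z_\ell$ denotes the concatenation of the three bits. *)

theory Defs
  imports "HOL-Analysis.Analysis"
begin

definition concise_binary_expansion :: "(nat \<Rightarrow> nat) \<Rightarrow> real \<Rightarrow> bool" where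
  "concise_binary_expansion z r \<longleftrightarrow>
     (\<forall>i. z i \<in> {0, 1}) \<and>
     (\<lambda>i. real (z i) / 2 ^ i) sums r \<and>
     \<not> (\<exists>N. \<forall>j\<ge>N. z j = 1)"

end

theory Submission
  imports Defs
begin

fun P :: "(nat \<Rightarrow> nat) \<Rightarrow> nat \<Rightarrow> nat" where
  "P d 0 = d 0"
| "P d (Suc n) = 2 * P d n + d (Suc n)"

lemma P_sum: "(\<Sum>i<Suc n. real (d i) / 2 ^ i) = real (P d n) / 2 ^ n"
  proof (induction n)
  case (Suc n)
  have "(\<Sum>i<Suc (Suc n). real (d i) / 2 ^ i) = real (P d n) / 2 ^ n + real (d (Suc n)) / 2 ^ Suc n"
    using Suc by simp
  also have "\<dots> = real (P d (Suc n)) / 2 ^ Suc n" by (simp add: field_simps)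
  finally show ?case .
qed simp

lemma tail_sums:
  assumes "concise_binary_expansion d r"
  shows "(\<lambda>i. real (d (i + Suc n)) / 2 ^ (i + Suc n)) sums (r - real (P d n) / 2 ^ n)"
proof -
  have "(\<lambda>i. real (d i) / 2 ^ i) sums r" using assms unfolding concise_binary_expansion_def by auto
  then show ?thesis
    using sums_iff_shift'[of "\<lambda>i. real (d i) / 2 ^ i" "Suc n" r] P_sum[where n=n and d=d] by simp
qed

lemma tail_props:
  fixes n :: nat
  assumes c: "concise_binary_expansion d r"
  defines "T \<equiv> r - real (P d n) / 2 ^ n"
  shows "0 \<le> T" "T < 1 / 2 ^ n" "T = 0 \<Longrightarrow> \<forall>j>n. d j = 0"
proof -
  let ?f = "\<lambda>i. real (d (i + Suc n)) / 2 ^ (i + Suc n)"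
  let ?g = "\<lambda>i. (1/2) ^ i * (1 / 2 ^ Suc n) :: real"
  have dig: "\<And>i. d i \<in> {0,1}" using c unfolding concise_binary_expansion_def by auto
  have fs: "?f sums T" using tail_sums[OF c] unfolding T_def .
  have fnn: "\<And>i. 0 \<le> ?f i" by simp
  have "?g sums (2 * (1 / 2 ^ Suc n))"
    by (rule sums_mult2) (use geometric_sums[of "1/2::real"] in simp)
  then have gs: "?g sums (1 / 2 ^ n)" by simp
  have fg: "\<And>i. ?f i \<le> ?g i"
  proof -
    fix i
    have "real (d (i + Suc n)) \<le> 1" using dig[of "i + Suc n"] by auto
    then show "?f i \<le> ?g i" by (simp add: power_add field_simps power_divide)
  qed
  show "0 \<le> T" using sums_le[of "\<lambda>_. 0" ?f 0 T] fs by simp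
  obtain j where j: "j \<ge> Suc n" "d j \<noteq> 1"
    using c unfolding concise_binary_expansion_def by blast
  then have dj: "d j = 0" using dig[of j] by auto
  have hs: "(\<lambda>i. ?g i - ?f i) sums (1 / 2 ^ n - T)" using sums_diff[OF gs fs] .
  have "0 < (\<Sum>i. ?g i - ?f i)"
  proof (rule suminf_pos2[where i = "j - Suc n"])
    show "summable (\<lambda>i. ?g i - ?f i)" using hs by (rule sums_summable)
    show "\<And>i. 0 \<le> ?g i - ?f i" using fg by simp
    show "0 < ?g (j - Suc n) - ?f (j - Suc n)" using j dj by simp
  qed
  then show "T < 1 / 2 ^ n" using sums_unique[OF hs] by simp
  assume "T = 0"
  then have "\<forall>i. ?f i = 0"
    using suminf_eq_zero_iff[of ?f] fs sums_unique[OF fs] sums_summable[OF fs] fnn by auto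
  then show "\<forall>j>n. d j = 0"
  proof (intro allI impI)
    fix j assume "n < j"
    then have jj: "j - Suc n + Suc n = j" by simp
    have "?f (j - Suc n) = 0" using \<open>\<forall>i. ?f i = 0\<close> by blast
    then show "d j = 0" unfolding jj by simp
  qed
qed

theorem propositionC1:
  fixes x y z :: real and xd yd zd :: "nat \<Rightarrow> nat" and l :: nat
  assumes "x \<in> {0..1}" and "y \<in> {0..1}" and "z \<in> {0..1}"
    and "z = x + y"
    and "concise_binary_expansion zd z"
    and "concise_binary_expansion xd x"
    and "concise_binary_expansion yd y"
    and "(xd l, yd l, zd l) \<in> {(0,0,0), (0,1,1), (1,0,1), (1,1,0)}"
    and "\<forall>j>l. zd j = 0"
  shows "\<forall>j>l. xd j = 0 \<and> yd j = 0"
proof -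
  define Tx where "Tx = x - real (P xd l) / 2 ^ l"
  define Ty where "Ty = y - real (P yd l) / 2 ^ l"
  define Tz where "Tz = z - real (P zd l) / 2 ^ l"
  note X = tail_props[OF assms(6), of l, folded Tx_def]
  note Y = tail_props[OF assms(7), of l, folded Ty_def]
  have "(\<lambda>i. real (zd (i + Suc l)) / 2 ^ (i + Suc l)) sums Tz"
    using tail_sums[OF assms(5), of l] unfolding Tz_def .
  moreover have "(\<lambda>i. real (zd (i + Suc l)) / 2 ^ (i + Suc l)) = (\<lambda>_. 0)"
    using assms(9) by auto
  ultimately have "Tz = 0" using sums_unique2 sums_zero by metis
  define a where "a = 2 ^ l * Tx"
  define b where "b = 2 ^ l * Ty"
  have a: "0 \<le> a" "a < 1" using X(1,2) unfolding a_def by (auto simp: field_simps)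
  have b: "0 \<le> b" "b < 1" using Y(1,2) unfolding b_def by (auto simp: field_simps)
  have eq: "real (P zd l) = real (P xd l) + real (P yd l) + a + b"
  proof -
    have "real (P zd l) = 2 ^ l * z" using \<open>Tz = 0\<close> unfolding Tz_def by simp
    moreover have "2 ^ l * x = real (P xd l) + a" unfolding a_def Tx_def by (simp add: field_simps)
    moreover have "2 ^ l * y = real (P yd l) + b" unfolding b_def Ty_def by (simp add: field_simps)
    ultimately show ?thesis using assms(4) by (simp add: distrib_left)
  qed
  define k where "k = int (P zd l) - int (P xd l) - int (P yd l)"
  have kab: "real_of_int k = a + b" using eq unfolding k_def by simp
  have "real_of_int k < real_of_int 2" "real_of_int 0 \<le> real_of_int k" using kab a b by auto
  then have "k < 2" "0 \<le> k" by (simp only: of_int_less_iff of_int_le_iff)+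
  then have "k = 0 \<or> k = 1" by auto
  moreover have "k \<noteq> 1"
  proof
    assume "k = 1"
    then have "P zd l = P xd l + P yd l + 1" unfolding k_def by simp
    then have "P zd l mod 2 = (P xd l + P yd l + 1) mod 2" by simp
    moreover have "\<And>d. P d l mod 2 = d l mod 2" by (cases l) auto
    ultimately have "zd l mod 2 = (xd l + yd l + 1) mod 2"
      by (metis mod_add_eq)
    then show False using assms(8) by auto
  qed
  ultimately have "a = 0" "b = 0" using kab a b by auto
  then have "Tx = 0" "Ty = 0" unfolding a_def b_def by auto
  then show ?thesis using X(3) Y(3) by auto
qed

end
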